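(* Let $n\ge 3$ and $m\ge 2$ be integers, let $S_n=K_{1,n}$ be the star with $n$ leaves and $P_m$ the path on $m$ vertices. Then $AT(S_n+_S P_m)=3$.
   Context: For an orientation $D$, a subdigraph is Eulerian if every vertex has equal in- and outdegree in it; $D$ is an AT-orientation if the numbers of Eulerian subgraphs with an even and with an odd number of arcs differ; $AT(G)$ is the smallest $k$ such that $G$ has an AT-orientation of maximum outdegree at most $k-1$. $S(G)$ is obtained from $G$ by subdividing each edge once, with vertex set identified with $V(G)\cup E(G)$. $G+_S H$ has vertex set $(V(G)\cup E(G))\times V(H)$, with $(u_1,u_2)\sim(v_1,v_2)$ iff [$u_1=v_1\in V(G)$ and $u_2v_2\in E(H)$] or [$u_2=v_2$ and $u_1v_1\in E(S(G))$]. *)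

theory Defs
  imports Main
begin

text \<open>A (simple, undirected) graph is a pair (V, E) of a vertex set and a set of
  2-element vertex subsets (edges).\<close>
type_synonym 'a graph = "'a set \<times> 'a set set"

definition orientation :: "'a graph \<Rightarrow> ('a \<times> 'a) set \<Rightarrow> bool" where
  "orientation G D \<longleftrightarrow>
     (\<forall>(u, v) \<in> D. {u, v} \<in> snd G) \<and>
     (\<forall>u v. {u, v} \<in> snd G \<longrightarrow> ((u, v) \<in> D \<longleftrightarrow> (v, u) \<notin> D))"

definition outdeg :: "('a \<times> 'a) set \<Rightarrow> 'a \<Rightarrow> nat" where
  "outdeg D v = card {w. (v, w) \<in> D}"

definition indeg :: "('a \<times> 'a) set \<Rightarrow> 'a \<Rightarrow> nat" where
  "indeg D v = card {w. (w, v) \<in> D}"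

definition eulerian :: "('a \<times> 'a) set \<Rightarrow> bool" where
  "eulerian H \<longleftrightarrow> (\<forall>v. indeg H v = outdeg H v)"

definition AT_orientation :: "('a \<times> 'a) set \<Rightarrow> bool" where
  "AT_orientation D \<longleftrightarrow>
     card {H. H \<subseteq> D \<and> eulerian H \<and> even (card H)}
       \<noteq> card {H. H \<subseteq> D \<and> eulerian H \<and> odd (card H)}"

definition AT :: "'a graph \<Rightarrow> nat" where
  "AT G = (LEAST k. \<exists>D. orientation G D \<and> AT_orientation D \<and>
                        (\<forall>v \<in> fst G. outdeg D v + 1 \<le> k))"

definition subdivision :: "'a graph \<Rightarrow> ('a + 'a set) graph" where
  "subdivision G = (Inl ` fst G \<union> Inr ` snd G,
                    {{Inl v, Inr e} | v e. e \<in> snd G \<and> v \<in> e})"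

definition sprod :: "'a graph \<Rightarrow> 'b graph \<Rightarrow> (('a + 'a set) \<times> 'b) graph" where
  "sprod G H = (fst (subdivision G) \<times> fst H,
     {{(Inl u, y), (Inl u, y')} | u y y'. u \<in> fst G \<and> {y, y'} \<in> snd H} \<union>
     {{(x, y), (x', y)} | x x' y. {x, x'} \<in> snd (subdivision G) \<and> y \<in> fst H})"

definition star :: "nat \<Rightarrow> nat graph" where
  "star n = ({0..n}, {{0, i} | i. i \<in> {1..n}})"

definition path :: "nat \<Rightarrow> nat graph" where
  "path m = ({0..<m}, {{i, Suc i} | i. Suc i < m})"

end

theory Submission
  imports Defs
begin

lemma V_eq: "fst (sprod (star n) (path m)) = (Inl ` {0..n} \<union> Inr ` ((\<lambda>i. {0,i}) ` {1..n})) \<times> {0..<m}"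
proof -
  have "snd (star n) = (\<lambda>i. {0,i}) ` {1..n}" unfolding star_def by auto
  then show ?thesis unfolding sprod_def subdivision_def by (simp add: star_def path_def)
qed

lemma finV: "finite (fst (sprod (star n) (path m)))"
  unfolding V_eq by auto

lemma sub_V:
  assumes "\<forall>e\<in>snd G. e \<subseteq> fst G" "z \<in> f" "f \<in> snd (subdivision G)"
  shows "z \<in> fst (subdivision G)"
proof -
  from assms(3) obtain v e where "f = {Inl v, Inr e}" "e \<in> snd G" "v \<in> e"
    unfolding subdivision_def by auto
  then show ?thesis using assms(1,2) unfolding subdivision_def by auto
qed

lemma sprod_V:
  assumes "\<forall>e\<in>snd G. e \<subseteq> fst G" "\<forall>e\<in>snd H. e \<subseteq> fst H"
    "z \<in> f" "f \<in> snd (sprod G H)"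
  shows "z \<in> fst (sprod G H)"
proof -
  from assms(4) consider (a) u y y' where "f = {(Inl u, y), (Inl u, y')}" "u \<in> fst G" "{y, y'} \<in> snd H"
    | (b) x x' y where "f = {(x, y), (x', y)}" "{x, x'} \<in> snd (subdivision G)" "y \<in> fst H"
    unfolding sprod_def by auto
  then show ?thesis
  proof cases
    case a
    then show ?thesis using assms(2,3) unfolding sprod_def subdivision_def by auto
  next
    case b
    have "x \<in> fst (subdivision G)" "x' \<in> fst (subdivision G)"
      using sub_V[OF assms(1) _ b(2)] by auto
    then show ?thesis using b assms(3) unfolding sprod_def by auto
  qed
qed

lemma star_ok: "\<forall>e\<in>snd (star n). e \<subseteq> fst (star n)"
  unfolding star_def by auto
lemma path_ok: "\<forall>e\<in>snd (path m). e \<subseteq> fst (path m)"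
  unfolding path_def by auto

lemma edge_V:
  assumes "{a,b} \<in> snd (sprod (star n) (path m))"
  shows "a \<in> fst (sprod (star n) (path m))" "b \<in> fst (sprod (star n) (path m))"
  using sprod_V[OF star_ok path_ok _ assms] by auto


definition D0 :: "nat \<Rightarrow> nat \<Rightarrow> (((nat + nat set) \<times> nat) \<times> ((nat + nat set) \<times> nat)) set" where
  "D0 n m = {((Inr {0,i}, y), (Inl v, y)) | i v y. i \<in> {1..n} \<and> (v = 0 \<or> v = i) \<and> y < m}
        \<union> {((Inl u, Suc y), (Inl u, y)) | u y. u \<le> n \<and> Suc y < m}"

lemma D0_mem: "(p,q) \<in> D0 n m \<longleftrightarrow>
   (\<exists>i v y. p = (Inr {0,i}, y) \<and> q = (Inl v, y) \<and> 1 \<le> i \<and> i \<le> n \<and> (v = 0 \<or> v = i) \<and> y < m) \<or>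
   (\<exists>u y. p = (Inl u, Suc y) \<and> q = (Inl u, y) \<and> u \<le> n \<and> Suc y < m)"
  unfolding D0_def by auto

lemma D0_orient: "orientation (sprod (star n) (path m)) (D0 n m)"
  unfolding orientation_def
proof (intro conjI allI impI)
  show "\<forall>(u, v)\<in>D0 n m. {u, v} \<in> snd (sprod (star n) (path m))"
  proof safe
    fix a b assume "(a,b) \<in> D0 n m"
    then consider (r) i v y where "a = (Inr {0,i}, y)" "b = (Inl v, y)" "i \<in> {1..n}" "v = 0 \<or> v = i" "y < m"
      | (l) u y where "a = (Inl u, Suc y)" "b = (Inl u, y)" "u \<le> n" "Suc y < m"
      unfolding D0_def by blast
    then show "{a,b} \<in> snd (sprod (star n) (path m))"
    proof cases
      case r
      have "{Inl v, Inr {0,i}} \<in> snd (subdivision (star n))"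
        using r unfolding subdivision_def star_def by auto
      then have "{(Inl v, y), (Inr {0,i}, y)} \<in> snd (sprod (star n) (path m))"
        using r unfolding sprod_def path_def by auto
      then show ?thesis using r by (simp add: insert_commute)
    next
      case l
      have "{y, Suc y} \<in> snd (path m)" using l unfolding path_def by auto
      then have "{(Inl u, y), (Inl u, Suc y)} \<in> snd (sprod (star n) (path m))"
        using l unfolding sprod_def star_def by auto
      then show ?thesis using l by (simp add: insert_commute)
    qed
  qed
next
  fix a b assume e: "{a, b} \<in> snd (sprod (star n) (path m))"
  then consider (a) u y y' where "{a,b} = {(Inl u, y), (Inl u, y')}" "u \<in> fst (star n)" "{y, y'} \<in> snd (path m)"
    | (b) x x' y where "{a,b} = {(x, y), (x', y)}" "{x, x'} \<in> snd (subdivision (star n))" "y \<in> fst (path m)"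
    unfolding sprod_def by auto
  then show "(a, b) \<in> D0 n m \<longleftrightarrow> (b, a) \<notin> D0 n m"
  proof cases
    case a
    then obtain i where i: "{y,y'} = {i, Suc i}" "Suc i < m" unfolding path_def by auto
    have u: "u \<le> n" using a unfolding star_def by auto
    from a(1) i(1) have "(a = (Inl u, i) \<and> b = (Inl u, Suc i)) \<or> (b = (Inl u, i) \<and> a = (Inl u, Suc i))"
      by (auto simp: doubleton_eq_iff)
    then show ?thesis
    proof (elim disjE conjE)
      assume "a = (Inl u, i)" "b = (Inl u, Suc i)"
      then show ?thesis using u i by (simp add: D0_mem)
    next
      assume "b = (Inl u, i)" "a = (Inl u, Suc i)"
      then show ?thesis using u i by (simp add: D0_mem)
    qed
  next
    case b
    then obtain v ee where ve: "{x,x'} = {Inl v, Inr ee}" "ee \<in> snd (star n)" "v \<in> ee"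
      unfolding subdivision_def by auto
    then obtain i where i: "ee = {0,i}" "i \<in> {1..n}" unfolding star_def by auto
    have y: "y < m" using b unfolding path_def by auto
    from b(1) ve(1) have "(a = (Inl v, y) \<and> b = (Inr ee, y)) \<or> (b = (Inl v, y) \<and> a = (Inr ee, y))"
      by (auto simp: doubleton_eq_iff)
    then show ?thesis
    proof (elim disjE conjE)
      assume "a = (Inl v, y)" "b = (Inr ee, y)"
      then show ?thesis using i y ve by (auto simp add: D0_mem)
    next
      assume "b = (Inl v, y)" "a = (Inr ee, y)"
      then show ?thesis using i y ve by (auto simp add: D0_mem)
    qed
  qed
qed


lemma card_le2: "A \<subseteq> {a,b} \<Longrightarrow> card A \<le> 2"
proof -
  assume "A \<subseteq> {a,b}"
  then have "card A \<le> card {a,b}" by (intro card_mono) auto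
  also have "card {a,b} \<le> 2" by (cases "a = b") auto
  finally show ?thesis .
qed

lemma card_le1: "A \<subseteq> {a} \<Longrightarrow> card A \<le> 1"
proof -
  assume "A \<subseteq> {a}"
  then have "card A \<le> card {a}" by (intro card_mono) auto
  then show ?thesis by simp
qed

lemma D0_outdeg:
  assumes "v \<in> fst (sprod (star n) (path m))"
  shows "outdeg (D0 n m) v + 1 \<le> 3"
proof -
  obtain x y where v: "v = (x, y)" by (cases v)
  show ?thesis
  proof (cases x)
    case (Inl u)
    have "{w. (v, w) \<in> D0 n m} \<subseteq> {(Inl u, y - 1)}"
      using v Inl by (auto simp: D0_mem)
    then have "card {w. (v, w) \<in> D0 n m} \<le> 1" by (rule card_le1)
    then show ?thesis unfolding outdeg_def by simp
  next
    case (Inr ee)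
    have "{w. (v, w) \<in> D0 n m} \<subseteq> {(Inl 0, y), (Inl (Max ee), y)}"
    proof
      fix w assume "w \<in> {w. (v, w) \<in> D0 n m}"
      then obtain i vv where "ee = {0,i}" "w = (Inl vv, y)" "vv = 0 \<or> vv = i"
        using v Inr by (auto simp: D0_mem)
      then show "w \<in> {(Inl 0, y), (Inl (Max ee), y)}" by auto
    qed
    then have "card {w. (v, w) \<in> D0 n m} \<le> 2" by (rule card_le2)
    then show ?thesis unfolding outdeg_def by simp
  qed
qed


lemma orient_sub:
  assumes "orientation G D" "\<And>a b. {a,b} \<in> snd G \<Longrightarrow> a \<in> fst G"
  shows "D \<subseteq> fst G \<times> fst G"
proof
  fix x assume "x \<in> D"
  then obtain a b where x: "x = (a,b)" "(a,b) \<in> D" by (cases x) auto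
  then have "{a,b} \<in> snd G" using assms(1) unfolding orientation_def by auto
  moreover then have "{b,a} \<in> snd G" by (simp add: insert_commute)
  ultimately show "x \<in> fst G \<times> fst G" using assms(2) x by blast
qed

lemma finD:
  assumes "orientation (sprod (star n) (path m)) D"
  shows "finite D"
  using orient_sub[OF assms edge_V(1)] finV by (meson finite_SigmaI rev_finite_subset)

definition pot :: "(nat + nat set) \<times> nat \<Rightarrow> nat" where
  "pot p = (case fst p of Inl _ \<Rightarrow> snd p | Inr _ \<Rightarrow> Suc (snd p))"

lemma D0_pot: "(p,q) \<in> D0 n m \<Longrightarrow> pot q < pot p"
  by (auto simp: D0_mem pot_def)

lemma acyc_euler:
  fixes phi :: "'a \<Rightarrow> nat"
  assumes fin: "finite D" and dec: "\<And>p q. (p,q) \<in> D \<Longrightarrow> phi q < phi p"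
    and H: "H \<subseteq> D" "eulerian H"
  shows "H = {}"
proof (rule ccontr)
  assume "H \<noteq> {}"
  then have ex: "\<exists>k p q. (p,q) \<in> H \<and> phi q = k" by auto
  define k where "k = (LEAST k. \<exists>p q. (p,q) \<in> H \<and> phi q = k)"
  from LeastI_ex[OF ex] obtain p q where pq: "(p,q) \<in> H" "phi q = k" unfolding k_def by blast
  have finH: "finite H" using fin H(1) finite_subset by blast
  have "{w. (w,q) \<in> H} \<subseteq> fst ` H" by force
  then have "finite {w. (w,q) \<in> H}" using finH finite_subset by blast
  moreover have "p \<in> {w. (w,q) \<in> H}" using pq by simp
  ultimately have "indeg H q \<noteq> 0" unfolding indeg_def by auto
  then have "outdeg H q \<noteq> 0" using H(2) unfolding eulerian_def by simp
  then obtain r where r: "(q,r) \<in> H" unfolding outdeg_def by (metis Collect_empty_eq card.empty)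
  then have "k \<le> phi r" unfolding k_def by (intro Least_le) blast
  moreover have "phi r < phi q" using dec r H(1) by blast
  ultimately show False using pq by simp
qed

lemma acyc_AT:
  fixes phi :: "'a \<Rightarrow> nat"
  assumes finD: "finite D" and decr: "\<And>p q. (p,q) \<in> D \<Longrightarrow> phi q < phi p"
  shows "AT_orientation D"
proof -
  have eul: "\<And>H. H \<subseteq> D \<Longrightarrow> eulerian H \<Longrightarrow> H = {}"
    using acyc_euler[of D phi] finD decr by blast
  have e1: "{H. H \<subseteq> D \<and> eulerian H \<and> even (card H)} = {{}}"
    using eul by (auto simp: eulerian_def indeg_def outdeg_def)
  have e2: "{H. H \<subseteq> D \<and> eulerian H \<and> odd (card H)} = {}"
  proof (safe)
    fix H assume "H \<subseteq> D" "eulerian H" "odd (card H)"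
    moreover then have "H = {}" using eul by blast
    ultimately show "H \<in> {}" by simp
  qed
  show ?thesis unfolding AT_orientation_def e1 e2 by simp
qed

lemma count_le:
  assumes "finite D" "finite W" "\<And>v. v \<in> W \<Longrightarrow> card {w. (v,w) \<in> D} \<le> 1"
    "D' \<subseteq> D" "\<And>a b. (a,b) \<in> D' \<Longrightarrow> a \<in> W"
  shows "card D' \<le> card W"
proof -
  have fo: "\<And>v. finite {w. (v,w) \<in> D}"
  proof -
    fix v have "{w. (v,w) \<in> D} \<subseteq> snd ` D" by force
    then show "finite {w. (v,w) \<in> D}" using assms(1) finite_subset by blast
  qed
  have "D' \<subseteq> Sigma W (\<lambda>v. {w. (v,w) \<in> D})" using assms(4,5) by auto
  then have "card D' \<le> card (Sigma W (\<lambda>v. {w. (v,w) \<in> D}))"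
    using assms(2) fo by (intro card_mono) auto
  also have "\<dots> = (\<Sum>v\<in>W. card {w. (v,w) \<in> D})" using assms(2) fo by (simp add: card_SigmaI)
  also have "\<dots> \<le> (\<Sum>v\<in>W. 1)" using assms(3) by (intro sum_mono) auto
  finally show ?thesis by simp
qed

lemma orient_cover:
  assumes "orientation G D" "S \<subseteq> snd G" "\<forall>e\<in>S. \<exists>a b. e = {a,b}"
  shows "S \<subseteq> (\<lambda>(p,q). {p,q}) ` {(p,q) \<in> D. {p,q} \<in> S}"
proof
  fix e assume e: "e \<in> S"
  then obtain a b where ab: "e = {a,b}" using assms(3) by blast
  then have "{a,b} \<in> snd G" using e assms(2) by auto
  then have "(a,b) \<in> D \<or> (b,a) \<in> D" using assms(1) unfolding orientation_def by blast
  then show "e \<in> (\<lambda>(p,q). {p,q}) ` {(p,q) \<in> D. {p,q} \<in> S}"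
  proof
    assume "(a,b) \<in> D" then show ?thesis using ab e by (auto intro!: image_eqI[where x="(a,b)"])
  next
    assume "(b,a) \<in> D" then show ?thesis using ab e
      by (auto intro!: image_eqI[where x="(b,a)"] simp: insert_commute)
  qed
qed

lemma hedge: "u \<le> n \<Longrightarrow> Suc y < m \<Longrightarrow> {(Inl u, y), (Inl u, Suc y)} \<in> snd (sprod (star n) (path m))"
proof -
  assume l: "u \<le> n" "Suc y < m"
  have "{y, Suc y} \<in> snd (path m)" using l unfolding path_def by auto
  then show ?thesis using l unfolding sprod_def star_def by auto
qed

lemma sedge: "1 \<le> i \<Longrightarrow> i \<le> n \<Longrightarrow> v = 0 \<or> v = i \<Longrightarrow> y < m \<Longrightarrow>
   {(Inl v, y), (Inr {0,i}, y)} \<in> snd (sprod (star n) (path m))"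
proof -
  assume r: "1 \<le> i" "i \<le> n" "v = 0 \<or> v = i" "y < m"
  have "{Inl v, Inr {0,i}} \<in> snd (subdivision (star n))"
    using r unfolding subdivision_def star_def by auto
  then show ?thesis using r unfolding sprod_def path_def by auto
qed


lemma sedge': "1 \<le> i \<Longrightarrow> i \<le> n \<Longrightarrow> v = 0 \<or> v = i \<Longrightarrow> y < m \<Longrightarrow>
   {(Inr {0,i}, y), (Inl v, y)} \<in> snd (sprod (star n) (path m))"
proof -
  assume a: "1 \<le> i" "i \<le> n" "v = 0 \<or> v = i" "y < m"
  have e: "{(Inr {0,i}, y), (Inl v, y)} = {(Inl v, y), (Inr {0::nat,i}, y)}" by (rule insert_commute)
  show ?thesis unfolding e by (rule sedge[OF a])
qed


lemma lower:
  assumes orD: "orientation (sprod (star n) (path m)) D"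
    and od: "\<forall>v\<in>fst (sprod (star n) (path m)). outdeg D v \<le> 1"
    and n: "2 \<le> n" and m: "2 \<le> m"
  shows False
proof -
  let ?G = "sprod (star n) (path m)"
  define A where "A = (\<lambda>y::nat. (Inl 0, y) :: (nat + nat set) \<times> nat)"
  define B where "B = (\<lambda>y::nat. (Inr {0,1}, y) :: (nat + nat set) \<times> nat)"
  define C where "C = (\<lambda>y::nat. (Inl 1, y) :: (nat + nat set) \<times> nat)"
  define E where "E = (\<lambda>y::nat. (Inr {0,2}, y) :: (nat + nat set) \<times> nat)"
  define F where "F = (\<lambda>y::nat. (Inl 2, y) :: (nat + nat set) \<times> nat)"
  define L where "L = [{B 0, A 0}, {B 0, C 0}, {E 0, A 0}, {E 0, F 0},
                       {B 1, A 1}, {B 1, C 1}, {E 1, A 1}, {E 1, F 1},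
                       {A 0, A 1}, {C 0, C 1}, {F 0, F 1}]"
  define W where "W = set [A 0, B 0, C 0, E 0, F 0, A 1, B 1, C 1, E 1, F 1]"
  have dist: "distinct L" unfolding L_def A_def B_def C_def E_def F_def
    by (simp add: doubleton_eq_iff)
  have "length L = 11" unfolding L_def by simp
  then have cardE: "card (set L) = 11" using distinct_card[OF dist] by simp
  have cardW: "card W \<le> 10" unfolding W_def
    using card_length[of "[A 0, B 0, C 0, E 0, F 0, A 1, B 1, C 1, E 1, F 1]"] by (simp only: list.size)
  have h: "{(Inl u, 0), (Inl u, 1)} \<in> snd ?G" if "u \<le> 2" for u :: nat
    using that n m hedge[of u n 0 m] by simp
  have s: "\<And>i v y. 1 \<le> i \<Longrightarrow> i \<le> 2 \<Longrightarrow> v = 0 \<or> v = i \<Longrightarrow> y \<le> 1 \<Longrightarrow> {(Inr {0,i}, y), (Inl v, y)} \<in> snd ?G"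
    using n m by (intro sedge') auto
  have sub: "set L \<subseteq> snd ?G"
    unfolding L_def A_def B_def C_def E_def F_def
    by (simp add: s h[of 0, simplified] h[of 1, simplified] h[of 2, simplified])
  have i1: "Inr {0,1} \<in> Inr ` (\<lambda>i. {0::nat,i}) ` {1..n}"
    by (rule imageI, rule image_eqI[where x=1]) (use n in auto)
  have i2: "Inr {0,2} \<in> Inr ` (\<lambda>i. {0::nat,i}) ` {1..n}"
    by (rule imageI, rule image_eqI[where x=2]) (use n in auto)
  have WV: "W \<subseteq> fst ?G" unfolding W_def A_def B_def C_def E_def F_def V_eq
    using n m i1 i2 by simp
  have UL: "\<And>e a. e \<in> set L \<Longrightarrow> a \<in> e \<Longrightarrow> a \<in> W"
    unfolding L_def W_def by (simp only: list.set insert_iff empty_iff) blast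
  define D' where "D' = {(p,q) \<in> D. {p,q} \<in> set L}"
  have finD: "finite D" using finD[OF orD] .
  have "D' \<subseteq> D" unfolding D'_def by auto
  then have finD': "finite D'" using finD finite_subset by blast
  have dbl: "\<forall>e\<in>set L. \<exists>a b. e = {a,b}" unfolding L_def by (simp only: list.set ball_simps) blast
  have "set L \<subseteq> (\<lambda>(p,q). {p,q}) ` D'"
    unfolding D'_def by (rule orient_cover[OF orD sub dbl])
  then have "card (set L) \<le> card ((\<lambda>(p,q). {p,q}) ` D')"
    using finD' by (intro card_mono) auto
  also have "\<dots> \<le> card D'" using finD' by (rule card_image_le)
  also have "\<dots> \<le> card W"
  proof (rule count_le[OF finD])
    show "finite W" unfolding W_def by simp
    show "\<And>v. v \<in> W \<Longrightarrow> card {w. (v, w) \<in> D} \<le> 1"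
      using od WV unfolding outdeg_def by blast
    show "D' \<subseteq> D" unfolding D'_def by auto
    show "\<And>a b. (a, b) \<in> D' \<Longrightarrow> a \<in> W" unfolding D'_def using UL by blast
  qed
  finally show False using cardE cardW by simp
qed


theorem corollary3p5:
  fixes n m :: nat
  assumes "n \<ge> 3" and "m \<ge> 2"
  shows "AT (sprod (star n) (path m)) = 3"
  unfolding AT_def
proof (rule Least_equality)
  show "\<exists>D. orientation (sprod (star n) (path m)) D \<and> AT_orientation D \<and>
        (\<forall>v\<in>fst (sprod (star n) (path m)). outdeg D v + 1 \<le> 3)"
  proof (intro exI conjI ballI)
    show o: "orientation (sprod (star n) (path m)) (D0 n m)" by (rule D0_orient)
    show "AT_orientation (D0 n m)" by (rule acyc_AT[OF finD[OF o] D0_pot])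
    show "\<And>v. v \<in> fst (sprod (star n) (path m)) \<Longrightarrow> outdeg (D0 n m) v + 1 \<le> 3"
      by (rule D0_outdeg)
  qed
next
  fix k assume "\<exists>D. orientation (sprod (star n) (path m)) D \<and> AT_orientation D \<and>
        (\<forall>v\<in>fst (sprod (star n) (path m)). outdeg D v + 1 \<le> k)"
  then obtain D where D: "orientation (sprod (star n) (path m)) D"
    "\<forall>v\<in>fst (sprod (star n) (path m)). outdeg D v + 1 \<le> k" by blast
  show "3 \<le> k"
  proof (rule ccontr)
    assume "\<not> 3 \<le> k"
    then have "\<forall>v\<in>fst (sprod (star n) (path m)). outdeg D v \<le> 1" using D(2) by fastforce
    then show False using lower[OF D(1)] assms by simp
  qed
qed

end
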